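(* Let $A\in\mathbb R^{m\times n}$ and for each $t$ let $\mathcal A_t=\{\mathbf u\in\mathbb R^n: A\mathbf u\ge 0\}$ (componentwise), with negative cone $-\mathcal A_t=\{-\mathbf u:\mathbf u\in\mathcal A_t\}$. Define recursively, backward in $t=T-1,\dots,0$, starting from $a_T^\pm=b_T^\pm=0$: $\widetilde{\mathbf K}_t^+\in\arg\min_{\mathbf K\in\mathcal A_t}F_t^+(\mathbf K)$, $\widetilde{\mathbf K}_t^-\in\arg\min_{\mathbf K\in-\mathcal A_t}F_t^-(\mathbf K)$ (with $F_t^\pm$ built from $a_{t+1}^\pm,b_{t+1}^\pm$), and with $Z_t^\pm=s_t+\mathbf P_t'\widetilde{\mathbf K}_t^\pm$, $a_t^+=\rho_{t+1}\mathbb E[\mathbf P_t]'\widetilde{\mathbf K}_t^++\mathbb E[a_{t+1}^+Z_t^+1_{\{Z_t^+\ge0\}}]+\mathbb E[a_{t+1}^-Z_t^+1_{\{Z_t^+<0\}}]$, $a_t^-=\rho_{t+1}\mathbb E[\mathbf P_t]'\widetilde{\mathbf K}_t^-+\mathbb E[a_{t+1}^+Z_t^-1_{\{Z_t^-\le0\}}]+\mathbb E[a_{t+1}^-Z_t^-1_{\{Z_t^->0\}}]$, $b_t^+=\rho_{t+1}^2(\widetilde{\mathbf K}_t^+)'\mathbb E[\mathbf P_t\mathbf P_t']\widetilde{\mathbf K}_t^++2\rho_{t+1}\mathbb E[a_{t+1}^+Z_t^+\mathbf P_t'\widetilde{\mathbf K}_t^+1_{\{Z_t^+\ge0\}}]+2\rho_{t+1}\mathbb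 E[a_{t+1}^-Z_t^+\mathbf P_t'\widetilde{\mathbf K}_t^+1_{\{Z_t^+<0\}}]+\mathbb E[b_{t+1}^+(Z_t^+)^21_{\{Z_t^+\ge0\}}]+\mathbb E[b_{t+1}^-(Z_t^+)^21_{\{Z_t^+<0\}}]$, $b_t^-=\rho_{t+1}^2(\widetilde{\mathbf K}_t^-)'\mathbb E[\mathbf P_t\mathbf P_t']\widetilde{\mathbf K}_t^-+2\rho_{t+1}\mathbb E[a_{t+1}^+Z_t^-\mathbf P_t'\widetilde{\mathbf K}_t^-1_{\{Z_t^-\le0\}}]+2\rho_{t+1}\mathbb E[a_{t+1}^-Z_t^-\mathbf P_t'\widetilde{\mathbf K}_t^-1_{\{Z_t^->0\}}]+\mathbb E[b_{t+1}^+(Z_t^-)^21_{\{Z_t^-\le0\}}]+\mathbb E[b_{t+1}^-(Z_t^-)^21_{\{Z_t^->0\}}]$. Then the time consistent behavioral portfolio policy of the cone-constrained nested mean-variance problem is, for $t=0,\dots,T-1$, $$\mathbf u_t^{TC}=\widetilde{\mathbf K}_t^+(X_t-\rho_t^{-1}W)1_{\{X_t\ge\rho_t^{-1}W\}}+\widetilde{\mathbf K}_t^-(X_t-\rho_t^{-1}W)1_{\{X_t<\rho_t^{-1}W\}}.$$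
   Context: Market: $T$ periods, one risk-free asset with deterministic gross return $s_t>1$ in period $t$, and $n$ risky assets with random gross return vector $\mathbf e_t$ in period $t$. The excess return vector is $\mathbf P_t=\mathbf e_t-s_t\mathbf 1\in\mathbb R^n$. The vectors $\mathbf P_0,\dots,\mathbf P_{T-1}$ are statistically independent, absolutely continuous, with finite first and second moments, and each covariance matrix $\mathrm{Cov}(\mathbf P_t)=\mathbb E[\mathbf P_t\mathbf P_t']-\mathbb E[\mathbf P_t]\mathbb E[\mathbf P_t]'$ is positive definite. The market is arbitrage-free; in particular, for every nonzero $\mathbf L\in\mathbb R^n$, neither $\mathbf P_t'\mathbf L\le 0$ a.s. nor $\mathbf P_t'\mathbf L\ge 0$ a.s. holds. Write $\rho_t=\prod_{j=t}^{T-1}s_j$ for $t<T$ and $\rho_T=1$. Wealth dynamics: $X_{t+1}=s_tX_t+\mathbf P_t'\mathbf u_t$, where $\mathbf u_t$ is a Markov feedback policy (deterministic function of $X_t$). An investment target $W\in\mathbb R$ is fixed. Behavioral risk aversion: for constants $\gamma_t^+,\gamma_t^-\ge0$, $\gamma_t(X_t)=\gamma_t^+(X_t-\rho_t^{-1}W)$ if $X_t\ge\rho_t^{-1}W$ and $\gamma_t(X_t)=-\gamma_t^-(X_t-\rho_t^{-1}W)$ if $X_t<\rho_t^{-1}W$. Cone-constrained time consistent policy: a Markov policy $(\mathbf u_0^{TC},\dots,\mathbf u_{T-1}^{TC})$ with $\mathbf u_t^{TC}(x)\in\mathcal A_t$ for all $x$ is time consistent if for every $t$ and every wealth level $X_t$,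 $\mathbf u_t^{TC}(X_t)$ minimizes over $\mathbf u_t\in\mathcal A_t$ the objective $\mathrm{Var}(X_T\mid X_t)-\gamma_t(X_t)\mathbb E[X_T\mid X_t]$, where $X_{t+1}=s_tX_t+\mathbf P_t'\mathbf u_t$ and $X_{j+1}=s_jX_j+\mathbf P_j'\mathbf u_j^{TC}(X_j)$ for $j=t+1,\dots,T-1$. Definition of $F_t^\pm:\mathbb R^n\to\mathbb R$, given deterministic numbers $a_{t+1}^\pm,b_{t+1}^\pm,\gamma_t^\pm$, writing $Z=s_t+\mathbf P_t'\mathbf K$: $$F_t^+(\mathbf K)=\rho_{t+1}^2\mathbf K'\mathrm{Cov}(\mathbf P_t)\mathbf K+\mathbb E\big[(2\rho_{t+1}a_{t+1}^++b_{t+1}^+)Z^21_{\{Z\ge0\}}\big]+\mathbb E\big[(2\rho_{t+1}a_{t+1}^-+b_{t+1}^-)Z^21_{\{Z<0\}}\big]-M_+^2-2\rho_{t+1}M_+\,(s_t+\mathbb E[\mathbf P_t]'\mathbf K)-\gamma_t^+M_+-\rho_{t+1}\gamma_t^+(s_t+\mathbb E[\mathbf P_t]'\mathbf K),$$ where $M_+=\mathbb E[a_{t+1}^+Z1_{\{Z\ge0\}}]+\mathbb E[a_{t+1}^-Z1_{\{Z<0\}}]$; and $$F_t^-(\mathbf K)=\rho_{t+1}^2\mathbf K'\mathrm{Cov}(\mathbf P_t)\mathbf K+\mathbb E\big[(2\rho_{t+1}a_{t+1}^++b_{t+1}^+)Z^21_{\{Z\le0\}}\big]+\mathbb E\big[(2\rho_{t+1}a_{t+1}^-+b_{t+1}^-)Z^21_{\{Z>0\}}\big]-M_-^2-2\rho_{t+1}M_-\,(s_t+\mathbb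 E[\mathbf P_t]'\mathbf K)+\gamma_t^-M_-+\rho_{t+1}\gamma_t^-(s_t+\mathbb E[\mathbf P_t]'\mathbf K),$$ where $M_-=\mathbb E[a_{t+1}^+Z1_{\{Z\le0\}}]+\mathbb E[a_{t+1}^-Z1_{\{Z>0\}}]$. *)

theory Defs
  imports "HOL-Probability.Probability"
begin

definition rho :: "(nat \<Rightarrow> real) \<Rightarrow> nat \<Rightarrow> nat \<Rightarrow> real" where
  "rho s T t = (\<Prod>j\<in>{t..<T}. s j)"

definition cone :: "real^'n^'m \<Rightarrow> (real^'n) set" where
  "cone A = {u. \<forall>i. (A *v u) $ i \<ge> 0}"

definition mean_vec :: "'a measure \<Rightarrow> ('a \<Rightarrow> real^'n) \<Rightarrow> real^'n" where
  "mean_vec M X = (\<chi> i. \<integral>\<omega>. X \<omega> $ i \<partial>M)"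

definition second_moment :: "'a measure \<Rightarrow> ('a \<Rightarrow> real^'n) \<Rightarrow> real^'n^'n" where
  "second_moment M X = (\<chi> i j. \<integral>\<omega>. X \<omega> $ i * X \<omega> $ j \<partial>M)"

definition cov_mat :: "'a measure \<Rightarrow> ('a \<Rightarrow> real^'n) \<Rightarrow> real^'n^'n" where
  "cov_mat M X = (\<chi> i j. (\<integral>\<omega>. X \<omega> $ i * X \<omega> $ j \<partial>M)
                          - (\<integral>\<omega>. X \<omega> $ i \<partial>M) * (\<integral>\<omega>. X \<omega> $ j \<partial>M))"

definition F_plus :: "'a measure \<Rightarrow> (nat \<Rightarrow> 'a \<Rightarrow> real^'n) \<Rightarrow> (nat \<Rightarrow> real) \<Rightarrow> nat \<Rightarrow>
    (nat \<Rightarrow> real) \<Rightarrow> (nat \<Rightarrow> real) \<Rightarrow> (nat \<Rightarrow> real) \<Rightarrow> (nat \<Rightarrow> real) \<Rightarrow> (nat \<Rightarrow> real) \<Rightarrow>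
    nat \<Rightarrow> real^'n \<Rightarrow> real" where
  "F_plus M P s T ap am bp bm gp t K =
    (let r = rho s T (Suc t);
         Z = (\<lambda>\<omega>. s t + P t \<omega> \<bullet> K);
         Mp = (\<integral>\<omega>. ap (Suc t) * Z \<omega> * (if Z \<omega> \<ge> 0 then 1 else 0) \<partial>M)
            + (\<integral>\<omega>. am (Suc t) * Z \<omega> * (if Z \<omega> < 0 then 1 else 0) \<partial>M);
         mZ = s t + mean_vec M (P t) \<bullet> K
     in r\<^sup>2 * (K \<bullet> (cov_mat M (P t) *v K))
        + (\<integral>\<omega>. (2 * r * ap (Suc t) + bp (Suc t)) * (Z \<omega>)\<^sup>2 * (if Z \<omega> \<ge> 0 then 1 else 0) \<partial>M)
        + (\<integral>\<omega>. (2 * r * am (Suc t) + bm (Suc t)) * (Z \<omega>)\<^sup>2 * (if Z \<omega> < 0 then 1 else 0) \<partial>M)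
        - Mp\<^sup>2 - 2 * r * Mp * mZ - gp t * Mp - r * gp t * mZ)"

definition F_minus :: "'a measure \<Rightarrow> (nat \<Rightarrow> 'a \<Rightarrow> real^'n) \<Rightarrow> (nat \<Rightarrow> real) \<Rightarrow> nat \<Rightarrow>
    (nat \<Rightarrow> real) \<Rightarrow> (nat \<Rightarrow> real) \<Rightarrow> (nat \<Rightarrow> real) \<Rightarrow> (nat \<Rightarrow> real) \<Rightarrow> (nat \<Rightarrow> real) \<Rightarrow>
    nat \<Rightarrow> real^'n \<Rightarrow> real" where
  "F_minus M P s T ap am bp bm gm t K =
    (let r = rho s T (Suc t);
         Z = (\<lambda>\<omega>. s t + P t \<omega> \<bullet> K);
         Mm = (\<integral>\<omega>. ap (Suc t) * Z \<omega> * (if Z \<omega> \<le> 0 then 1 else 0) \<partial>M)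
            + (\<integral>\<omega>. am (Suc t) * Z \<omega> * (if Z \<omega> > 0 then 1 else 0) \<partial>M);
         mZ = s t + mean_vec M (P t) \<bullet> K
     in r\<^sup>2 * (K \<bullet> (cov_mat M (P t) *v K))
        + (\<integral>\<omega>. (2 * r * ap (Suc t) + bp (Suc t)) * (Z \<omega>)\<^sup>2 * (if Z \<omega> \<le> 0 then 1 else 0) \<partial>M)
        + (\<integral>\<omega>. (2 * r * am (Suc t) + bm (Suc t)) * (Z \<omega>)\<^sup>2 * (if Z \<omega> > 0 then 1 else 0) \<partial>M)
        - Mm\<^sup>2 - 2 * r * Mm * mZ + gm t * Mm + r * gm t * mZ)"

definition gamma_fun :: "(nat \<Rightarrow> real) \<Rightarrow> nat \<Rightarrow> (nat \<Rightarrow> real) \<Rightarrow> (nat \<Rightarrow> real) \<Rightarrow> real \<Rightarrow> nat \<Rightarrow> real \<Rightarrow> real" where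
  "gamma_fun s T gp gm W t x =
    (if x \<ge> W / rho s T t then gp t * (x - W / rho s T t) else - gm t * (x - W / rho s T t))"

fun wealth_run :: "(nat \<Rightarrow> real) \<Rightarrow> (nat \<Rightarrow> 'a \<Rightarrow> real^'n) \<Rightarrow> (nat \<Rightarrow> real \<Rightarrow> real^'n) \<Rightarrow>
    nat \<Rightarrow> nat \<Rightarrow> real \<Rightarrow> 'a \<Rightarrow> real" where
  "wealth_run s P u j 0 y \<omega> = y"
| "wealth_run s P u j (Suc k) y \<omega> = wealth_run s P u (Suc j) k (s j * y + P j \<omega> \<bullet> u j y) \<omega>"

definition terminal_wealth :: "(nat \<Rightarrow> real) \<Rightarrow> (nat \<Rightarrow> 'a \<Rightarrow> real^'n) \<Rightarrow> (nat \<Rightarrow> real \<Rightarrow> real^'n) \<Rightarrow>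
    nat \<Rightarrow> nat \<Rightarrow> real \<Rightarrow> real^'n \<Rightarrow> 'a \<Rightarrow> real" where
  "terminal_wealth s P u T t x v \<omega> =
     wealth_run s P u (Suc t) (T - Suc t) (s t * x + P t \<omega> \<bullet> v) \<omega>"

text \<open>Objective Var(X_T | X_t = x) - gamma_t(x) E[X_T | X_t = x].\<close>
definition tc_objective :: "'a measure \<Rightarrow> (nat \<Rightarrow> 'a \<Rightarrow> real^'n) \<Rightarrow> (nat \<Rightarrow> real) \<Rightarrow> nat \<Rightarrow>
    (nat \<Rightarrow> real) \<Rightarrow> (nat \<Rightarrow> real) \<Rightarrow> real \<Rightarrow> (nat \<Rightarrow> real \<Rightarrow> real^'n) \<Rightarrow>
    nat \<Rightarrow> real \<Rightarrow> real^'n \<Rightarrow> real" where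
  "tc_objective M P s T gp gm W u t x v =
    (let XT = terminal_wealth s P u T t x v
     in (\<integral>\<omega>. (XT \<omega> - (\<integral>\<omega>'. XT \<omega>' \<partial>M))\<^sup>2 \<partial>M)
        - gamma_fun s T gp gm W t x * (\<integral>\<omega>. XT \<omega> \<partial>M))"

text \<open>Cone-constrained time consistent Markov policy (same cone A_t = cone A for all t).\<close>
definition time_consistent :: "'a measure \<Rightarrow> (nat \<Rightarrow> 'a \<Rightarrow> real^'n) \<Rightarrow> (nat \<Rightarrow> real) \<Rightarrow> nat \<Rightarrow>
    real^'n^'m \<Rightarrow> (nat \<Rightarrow> real) \<Rightarrow> (nat \<Rightarrow> real) \<Rightarrow> real \<Rightarrow> (nat \<Rightarrow> real \<Rightarrow> real^'n) \<Rightarrow> bool" where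
  "time_consistent M P s T A gp gm W u \<longleftrightarrow>
    (\<forall>t<T. \<forall>x. u t x \<in> cone A \<and>
       (\<forall>v\<in>cone A. tc_objective M P s T gp gm W u t x (u t x)
                   \<le> tc_objective M P s T gp gm W u t x v))"

end

theory Submission
  imports Defs
begin



lemma rho_Suc: "t < T \<Longrightarrow> rho s T t = s t * rho s T (Suc t)"
  unfolding rho_def by (simp add: prod.atLeast_Suc_lessThan)

lemma rho_T: "rho s T T = 1" unfolding rho_def by simp

lemma rho_pos: "(\<And>t. t < T \<Longrightarrow> s t > 1) \<Longrightarrow> rho s T t > 0"
  unfolding rho_def by (rule prod_pos) (smt (verit) atLeastLessThan_iff)

locale tc_setup = prob_space M
  for M :: "'a measure" +
  fixes P :: "nat \<Rightarrow> 'a \<Rightarrow> real^'n" and s :: "nat \<Rightarrow> real" and T :: nat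
    and Kp Km :: "nat \<Rightarrow> real^'n" and W :: real
  assumes s_gt1: "\<And>t. t < T \<Longrightarrow> s t > 1"
    and meas: "\<And>t. t < T \<Longrightarrow> P t \<in> borel_measurable M"
    and indep: "indep_vars (\<lambda>_. borel) P {..<T}"
    and second_mom: "\<And>t i. t < T \<Longrightarrow> integrable M (\<lambda>\<omega>. (P t \<omega> $ i)\<^sup>2)"
  fixes ap am bp bm :: "nat \<Rightarrow> real"
  assumes term_a: "ap T = 0" "am T = 0"
    and term_b: "bp T = 0" "bm T = 0"
    and ap_rec: "\<And>t. t < T \<Longrightarrow> ap t =
        rho s T (Suc t) * (mean_vec M (P t) \<bullet> Kp t)
        + (\<integral>\<omega>. ap (Suc t) * (s t + P t \<omega> \<bullet> Kp t) * (if s t + P t \<omega> \<bullet> Kp t \<ge> 0 then 1 else 0) \<partial>M)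
        + (\<integral>\<omega>. am (Suc t) * (s t + P t \<omega> \<bullet> Kp t) * (if s t + P t \<omega> \<bullet> Kp t < 0 then 1 else 0) \<partial>M)"
    and am_rec: "\<And>t. t < T \<Longrightarrow> am t =
        rho s T (Suc t) * (mean_vec M (P t) \<bullet> Km t)
        + (\<integral>\<omega>. ap (Suc t) * (s t + P t \<omega> \<bullet> Km t) * (if s t + P t \<omega> \<bullet> Km t \<le> 0 then 1 else 0) \<partial>M)
        + (\<integral>\<omega>. am (Suc t) * (s t + P t \<omega> \<bullet> Km t) * (if s t + P t \<omega> \<bullet> Km t > 0 then 1 else 0) \<partial>M)"
    and bp_rec: "\<And>t. t < T \<Longrightarrow> bp t =
        (rho s T (Suc t))\<^sup>2 * (Kp t \<bullet> (second_moment M (P t) *v Kp t))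
        + 2 * rho s T (Suc t) * (\<integral>\<omega>. ap (Suc t) * (s t + P t \<omega> \<bullet> Kp t) * (P t \<omega> \<bullet> Kp t)
              * (if s t + P t \<omega> \<bullet> Kp t \<ge> 0 then 1 else 0) \<partial>M)
        + 2 * rho s T (Suc t) * (\<integral>\<omega>. am (Suc t) * (s t + P t \<omega> \<bullet> Kp t) * (P t \<omega> \<bullet> Kp t)
              * (if s t + P t \<omega> \<bullet> Kp t < 0 then 1 else 0) \<partial>M)
        + (\<integral>\<omega>. bp (Suc t) * (s t + P t \<omega> \<bullet> Kp t)\<^sup>2 * (if s t + P t \<omega> \<bullet> Kp t \<ge> 0 then 1 else 0) \<partial>M)
        + (\<integral>\<omega>. bm (Suc t) * (s t + P t \<omega> \<bullet> Kp t)\<^sup>2 * (if s t + P t \<omega> \<bullet> Kp t < 0 then 1 else 0) \<partial>M)"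
    and bm_rec: "\<And>t. t < T \<Longrightarrow> bm t =
        (rho s T (Suc t))\<^sup>2 * (Km t \<bullet> (second_moment M (P t) *v Km t))
        + 2 * rho s T (Suc t) * (\<integral>\<omega>. ap (Suc t) * (s t + P t \<omega> \<bullet> Km t) * (P t \<omega> \<bullet> Km t)
              * (if s t + P t \<omega> \<bullet> Km t \<le> 0 then 1 else 0) \<partial>M)
        + 2 * rho s T (Suc t) * (\<integral>\<omega>. am (Suc t) * (s t + P t \<omega> \<bullet> Km t) * (P t \<omega> \<bullet> Km t)
              * (if s t + P t \<omega> \<bullet> Km t > 0 then 1 else 0) \<partial>M)
        + (\<integral>\<omega>. bp (Suc t) * (s t + P t \<omega> \<bullet> Km t)\<^sup>2 * (if s t + P t \<omega> \<bullet> Km t \<le> 0 then 1 else 0) \<partial>M)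
        + (\<integral>\<omega>. bm (Suc t) * (s t + P t \<omega> \<bullet> Km t)\<^sup>2 * (if s t + P t \<omega> \<bullet> Km t > 0 then 1 else 0) \<partial>M)"
begin

definition cc :: "nat \<Rightarrow> real" where "cc j = W / rho s T j"

fun HH :: "bool \<Rightarrow> nat \<Rightarrow> nat \<Rightarrow> (nat \<Rightarrow> real^'n) \<Rightarrow> real" where
  "HH sg 0 j p = 1"
| "HH sg (Suc k) j p = (let z = s j + p j \<bullet> (if sg then Kp j else Km j)
      in z * HH (if sg then 0 \<le> z else z \<le> 0) k (Suc j) p)"

definition pol :: "nat \<Rightarrow> real \<Rightarrow> real^'n" where
  "pol = (\<lambda>t x. if x \<ge> W / rho s T t then (x - W / rho s T t) *\<^sub>R Kp t
                  else (x - W / rho s T t) *\<^sub>R Km t)"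

lemma cc_Suc: "t < T \<Longrightarrow> s t * cc t = cc (Suc t)"
  using s_gt1[of t] rho_Suc[of t T s] by (simp add: cc_def)

lemma cc_T: "cc T = W" by (simp add: cc_def rho_T)

lemma wealth_lemma:
  "j + k = T \<Longrightarrow> wealth_run s P pol j k x \<omega> - W = (x - cc j) * HH (cc j \<le> x) k j (\<lambda>i. P i \<omega>)"
proof (induction k arbitrary: j x)
  case 0
  then show ?case by (simp add: cc_T)
next
  case (Suc k)
  define K where "K = (if cc j \<le> x then Kp j else Km j)"
  define z where "z = s j + P j \<omega> \<bullet> K"
  define x' where "x' = s j * x + P j \<omega> \<bullet> pol j x"
  have jT: "j < T" using Suc by simp
  have pj: "pol j x = (x - cc j) *\<^sub>R K" unfolding pol_def K_def cc_def by simp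
  have x': "x' - cc (Suc j) = (x - cc j) * z"
    unfolding x'_def pj z_def using cc_Suc[OF jT, symmetric]
    by (simp add: algebra_simps)
  have IH: "wealth_run s P pol (Suc j) k x' \<omega> - W = (x' - cc (Suc j)) * HH (cc (Suc j) \<le> x') k (Suc j) (\<lambda>i. P i \<omega>)"
    using Suc by simp
  have sg: "(x - cc j) * z * HH (cc (Suc j) \<le> x') k (Suc j) (\<lambda>i. P i \<omega>)
     = (x - cc j) * z * HH (if cc j \<le> x then 0 \<le> z else z \<le> 0) k (Suc j) (\<lambda>i. P i \<omega>)"
  proof (cases "x = cc j")
    case False
    have "(cc (Suc j) \<le> x') = (if cc j \<le> x then 0 \<le> z else z \<le> 0)"
      using x' False zero_le_mult_iff[of "x - cc j" z]
      by (smt (verit) mult_le_0_iff)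
    then show ?thesis by simp
  qed simp
  have H: "HH (cc j \<le> x) (Suc k) j (\<lambda>i. P i \<omega>) = z * HH (if cc j \<le> x then 0 \<le> z else z \<le> 0) k (Suc j) (\<lambda>i. P i \<omega>)"
    unfolding HH.simps Let_def z_def K_def by (cases "cc j \<le> x") simp_all
  have W: "wealth_run s P pol j (Suc k) x \<omega> = wealth_run s P pol (Suc j) k x' \<omega>"
    by (simp add: x'_def)
  show ?case
    unfolding W IH H x' using sg by (simp add: mult.assoc)
qed

lemma HH_local: "(\<And>i. j \<le> i \<Longrightarrow> i < j + k \<Longrightarrow> p i = q i) \<Longrightarrow> HH sg k j p = HH sg k j q"
proof (induction k arbitrary: j sg)
  case (Suc k)
  have "HH b k (Suc j) p = HH b k (Suc j) q" for b using Suc.prems by (intro Suc.IH) auto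
  moreover have "p j = q j" using Suc.prems by auto
  ultimately show ?case by (simp add: Let_def)
qed simp

lemma HH_meas: "{j..<j+k} \<subseteq> I \<Longrightarrow> (\<lambda>p. HH sg k j p) \<in> borel_measurable (PiM I (\<lambda>_. borel))"
proof (induction k arbitrary: j sg)
  case 0
  then show ?case by simp
next
  case (Suc k)
  have jI: "j \<in> I" using Suc.prems by auto
  have IH: "(\<lambda>p. HH b k (Suc j) p) \<in> borel_measurable (PiM I (\<lambda>_. borel))" for b
    using Suc.prems by (intro Suc.IH) auto
  have cj: "(\<lambda>p. p j) \<in> borel_measurable (PiM I (\<lambda>_. borel))"
    by (rule measurable_component_singleton[OF jI])
  define K where "K = (if sg then Kp j else Km j)"
  have z: "(\<lambda>p. s j + p j \<bullet> K) \<in> borel_measurable (PiM I (\<lambda>_. borel))"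
    using cj by measurable
  have eq: "(\<lambda>p. HH sg (Suc k) j p) = (\<lambda>p. if (if sg then 0 \<le> s j + p j \<bullet> K else s j + p j \<bullet> K \<le> 0)
      then (s j + p j \<bullet> K) * HH True k (Suc j) p else (s j + p j \<bullet> K) * HH False k (Suc j) p)"
    by (auto simp: Let_def K_def)
  show ?case unfolding eq using z IH by measurable
qed

lemma indep_PH:
  assumes t: "t < T" and f: "f \<in> borel_measurable borel"
    and g: "g \<in> borel_measurable (PiM {Suc t..<T} (\<lambda>_. borel))"
  shows "indep_var borel (\<lambda>\<omega>. f (P t \<omega>)) borel (\<lambda>\<omega>. g (restrict (\<lambda>i. P i \<omega>) {Suc t..<T}))"
proof -
  have "indep_var (PiM {t} (\<lambda>_. borel)) (\<lambda>\<omega>. restrict (\<lambda>i. P i \<omega>) {t})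
     (PiM {Suc t..<T} (\<lambda>_. borel)) (\<lambda>\<omega>. restrict (\<lambda>i. P i \<omega>) {Suc t..<T})"
    by (rule indep_var_restrict[OF indep]) (use t in auto)
  moreover have "(\<lambda>r. f (r t)) \<in> borel_measurable (PiM {t} (\<lambda>_. borel))"
    using measurable_compose[OF measurable_component_singleton[of t "{t}"] f] by simp
  ultimately have "indep_var borel ((\<lambda>r. f (r t)) \<circ> (\<lambda>\<omega>. restrict (\<lambda>i. P i \<omega>) {t}))
     borel (g \<circ> (\<lambda>\<omega>. restrict (\<lambda>i. P i \<omega>) {Suc t..<T}))"
    using g by (intro indep_var_compose)
  then show ?thesis by (simp add: comp_def)
qed

lemma Pi_meas: "t < T \<Longrightarrow> (\<lambda>\<omega>. P t \<omega> $ i) \<in> borel_measurable M"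
proof -
  assume "t < T"
  then have [measurable]: "P t \<in> borel_measurable M" by (rule meas)
  have "(\<lambda>\<omega>. P t \<omega> \<bullet> axis i 1) \<in> borel_measurable M" by measurable
  then show ?thesis by (simp add: inner_axis)
qed

lemma int_bound_help:
  assumes "integrable M f" "g \<in> borel_measurable M" "\<And>\<omega>. \<bar>g \<omega>\<bar> \<le> \<bar>f \<omega>\<bar>"
  shows "integrable M (g :: 'a \<Rightarrow> real)"
  using assms by (intro Bochner_Integration.integrable_bound[OF assms(1,2)]) auto

lemma Pi_int: "t < T \<Longrightarrow> integrable M (\<lambda>\<omega>. P t \<omega> $ i)"
proof -
  assume t: "t < T"
  have "integrable M (\<lambda>\<omega>. 1 + (P t \<omega> $ i)\<^sup>2)"
    using second_mom[OF t] by simp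
  moreover have "\<bar>x\<bar> \<le> \<bar>1 + x\<^sup>2\<bar>" for x :: real
  proof -
    have "0 \<le> (\<bar>x\<bar> - 1)\<^sup>2" by simp
    then have "2 * \<bar>x\<bar> \<le> 1 + \<bar>x\<bar>\<^sup>2" by (simp add: power2_eq_square algebra_simps)
    then show ?thesis by simp
  qed
  ultimately show ?thesis using Pi_meas[OF t] int_bound_help by blast
qed

lemma PP_int: "t < T \<Longrightarrow> integrable M (\<lambda>\<omega>. P t \<omega> $ i * P t \<omega> $ j)"
proof -
  assume t: "t < T"
  have "integrable M (\<lambda>\<omega>. (P t \<omega> $ i)\<^sup>2 + (P t \<omega> $ j)\<^sup>2)"
    using second_mom[OF t] by simp
  moreover have "\<bar>x * y\<bar> \<le> \<bar>x\<^sup>2 + y\<^sup>2\<bar>" for x y :: real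
  proof -
    have "0 \<le> (\<bar>x\<bar> - \<bar>y\<bar>)\<^sup>2" by simp
    then have "2 * (\<bar>x\<bar> * \<bar>y\<bar>) \<le> \<bar>x\<bar>\<^sup>2 + \<bar>y\<bar>\<^sup>2" by (simp add: power2_eq_square algebra_simps)
    moreover have "\<bar>x * y\<bar> = \<bar>x\<bar> * \<bar>y\<bar>" by (simp add: abs_mult)
    moreover have "\<bar>x\<^sup>2 + y\<^sup>2\<bar> = x\<^sup>2 + y\<^sup>2" by simp
    moreover have "0 \<le> \<bar>x\<bar> * \<bar>y\<bar>" by simp
    moreover have "\<bar>x\<bar>\<^sup>2 = x\<^sup>2" "\<bar>y\<bar>\<^sup>2 = y\<^sup>2" by simp_all
    ultimately show ?thesis by linarith
  qed
  moreover have "(\<lambda>\<omega>. P t \<omega> $ i * P t \<omega> $ j) \<in> borel_measurable M"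
    using Pi_meas[OF t] by measurable
  ultimately show ?thesis using int_bound_help by blast
qed

lemma PK_int: "t < T \<Longrightarrow> integrable M (\<lambda>\<omega>. P t \<omega> \<bullet> K)"
  unfolding inner_vec_def using Pi_int by simp

lemma PK_integral: "t < T \<Longrightarrow> (\<integral>\<omega>. P t \<omega> \<bullet> K \<partial>M) = mean_vec M (P t) \<bullet> K"
  unfolding inner_vec_def mean_vec_def using Pi_int by (simp add: integral_sum)

lemma PK2_eq: "(x \<bullet> K)\<^sup>2 = (\<Sum>i\<in>UNIV. \<Sum>j\<in>UNIV. (x $ i * x $ j) * (K $ i * K $ j))"
  for x K :: "real^'n"
  unfolding inner_vec_def power2_eq_square sum_product by (simp add: algebra_simps)

lemma PK2_int: "t < T \<Longrightarrow> integrable M (\<lambda>\<omega>. (P t \<omega> \<bullet> K)\<^sup>2)"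
  unfolding PK2_eq using PP_int by simp

lemma PK2_integral: "t < T \<Longrightarrow> (\<integral>\<omega>. (P t \<omega> \<bullet> K)\<^sup>2 \<partial>M) = K \<bullet> (second_moment M (P t) *v K)"
proof -
  assume t: "t < T"
  have "(\<lambda>\<omega>. (P t \<omega> \<bullet> K)\<^sup>2) = (\<lambda>\<omega>. \<Sum>i\<in>UNIV. \<Sum>j\<in>UNIV. (P t \<omega> $ i * P t \<omega> $ j) * (K $ i * K $ j))"
    by (simp only: PK2_eq)
  then have "(\<integral>\<omega>. (P t \<omega> \<bullet> K)\<^sup>2 \<partial>M) = (\<Sum>i\<in>UNIV. \<Sum>j\<in>UNIV. (\<integral>\<omega>. P t \<omega> $ i * P t \<omega> $ j \<partial>M) * (K $ i * K $ j))"
    using PP_int[OF t] by (simp add: integral_sum)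
  also have "\<dots> = K \<bullet> (second_moment M (P t) *v K)"
    unfolding second_moment_def inner_vec_def matrix_vector_mult_def
    by (simp add: sum_distrib_left algebra_simps)
  finally show ?thesis .
qed

lemma cov_eq: "K \<bullet> (cov_mat M (P t) *v K) = K \<bullet> (second_moment M (P t) *v K) - (mean_vec M (P t) \<bullet> K)\<^sup>2"
  unfolding cov_mat_def second_moment_def mean_vec_def inner_vec_def matrix_vector_mult_def power2_eq_square
  by (simp add: sum_distrib_left sum_product sum_subtractf[symmetric] algebra_simps)

end



context tc_setup begin

definition KK :: "bool \<Rightarrow> nat \<Rightarrow> real^'n" where "KK sg t = (if sg then Kp t else Km t)"
definition aa :: "bool \<Rightarrow> nat \<Rightarrow> real" where "aa sg t = (if sg then ap t else am t)"
definition bb :: "bool \<Rightarrow> nat \<Rightarrow> real" where "bb sg t = (if sg then bp t else bm t)"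
definition pos :: "bool \<Rightarrow> real \<Rightarrow> bool" where "pos sg z = (if sg then 0 \<le> z else z \<le> 0)"

lemma z_meas: "t < T \<Longrightarrow> (\<lambda>\<omega>. c + P t \<omega> \<bullet> K) \<in> borel_measurable M"
proof -
  assume "t < T"
  then have [measurable]: "P t \<in> borel_measurable M" by (rule meas)
  show ?thesis by measurable
qed

lemma pos_pred: "g \<in> borel_measurable N \<Longrightarrow> Measurable.pred N (\<lambda>x. pos sg (g x))"
proof -
  assume [measurable]: "g \<in> borel_measurable N"
  show ?thesis unfolding pos_def by (cases sg) (simp_all, measurable)
qed

lemma pos_pred_borel: "Measurable.pred borel (\<lambda>r. pos sg (c + r \<bullet> (K::real^'n)))"
  by (rule pos_pred) measurable

lemma z_int: "t < T \<Longrightarrow> integrable M (\<lambda>\<omega>. c + P t \<omega> \<bullet> K)"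
  using PK_int by simp

lemma z_integral: "t < T \<Longrightarrow> (\<integral>\<omega>. c + P t \<omega> \<bullet> K \<partial>M) = c + mean_vec M (P t) \<bullet> K"
  using PK_int PK_integral by (simp add: prob_space)

lemma z2_eq: "(c + x)\<^sup>2 = c\<^sup>2 + 2 * c * x + x\<^sup>2" for c x :: real
  by (simp add: power2_eq_square algebra_simps)

lemma z2_int: "t < T \<Longrightarrow> integrable M (\<lambda>\<omega>. (c + P t \<omega> \<bullet> K)\<^sup>2)"
  unfolding z2_eq using PK_int PK2_int by simp

lemma z2_integral: "t < T \<Longrightarrow> (\<integral>\<omega>. (c + P t \<omega> \<bullet> K)\<^sup>2 \<partial>M)
    = c\<^sup>2 + 2 * c * (mean_vec M (P t) \<bullet> K) + K \<bullet> (second_moment M (P t) *v K)"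
  unfolding z2_eq using PK_int PK2_int PK_integral PK2_integral by (simp add: prob_space)

lemma ind_int: "integrable M f \<Longrightarrow> Measurable.pred M B \<Longrightarrow> integrable M (\<lambda>\<omega>. f \<omega> * (if B \<omega> then 1 else 0 :: real))"
proof -
  assume a: "integrable M f" and [measurable]: "Measurable.pred M B"
  have [measurable]: "f \<in> borel_measurable M" using a by (rule borel_measurable_integrable)
  show ?thesis
    apply (rule int_bound_help[OF a])
    apply measurable
    done
qed

lemma ind_split: "integrable M f \<Longrightarrow> Measurable.pred M B \<Longrightarrow>
   (\<integral>\<omega>. f \<omega> * (if B \<omega> then 1 else 0 :: real) \<partial>M) + (\<integral>\<omega>. f \<omega> * (if \<not> B \<omega> then 1 else 0 :: real) \<partial>M) = (\<integral>\<omega>. f \<omega> \<partial>M)"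
proof -
  assume a: "integrable M f" "Measurable.pred M B"
  have p2: "Measurable.pred M (\<lambda>\<omega>. \<not> B \<omega>)" using a(2) by measurable
  have "(\<integral>\<omega>. f \<omega> * (if B \<omega> then 1 else 0 :: real) \<partial>M) + (\<integral>\<omega>. f \<omega> * (if \<not> B \<omega> then 1 else 0 :: real) \<partial>M)
     = (\<integral>\<omega>. f \<omega> * (if B \<omega> then 1 else 0 :: real) + f \<omega> * (if \<not> B \<omega> then 1 else 0 :: real) \<partial>M)"
    using ind_int[OF a] ind_int[OF a(1) p2] by simp
  also have "\<dots> = (\<integral>\<omega>. f \<omega> \<partial>M)" by (rule Bochner_Integration.integral_cong) auto
  finally show ?thesis .
qed

lemma zpreds:
  assumes t: "t < T"
  shows "Measurable.pred M (\<lambda>\<omega>. 0 \<le> c + P t \<omega> \<bullet> K)" "Measurable.pred M (\<lambda>\<omega>. c + P t \<omega> \<bullet> K \<le> 0)"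
    "Measurable.pred M (\<lambda>\<omega>. c + P t \<omega> \<bullet> K < 0)" "Measurable.pred M (\<lambda>\<omega>. 0 < c + P t \<omega> \<bullet> K)"
    "Measurable.pred M (\<lambda>\<omega>. pos sg (c + P t \<omega> \<bullet> K))" "Measurable.pred M (\<lambda>\<omega>. \<not> pos sg (c + P t \<omega> \<bullet> K))"
proof -
  note [measurable] = z_meas[OF t]
  show "Measurable.pred M (\<lambda>\<omega>. 0 \<le> c + P t \<omega> \<bullet> K)" by measurable
  show "Measurable.pred M (\<lambda>\<omega>. c + P t \<omega> \<bullet> K \<le> 0)" by measurable
  show "Measurable.pred M (\<lambda>\<omega>. c + P t \<omega> \<bullet> K < 0)" by measurable
  show "Measurable.pred M (\<lambda>\<omega>. 0 < c + P t \<omega> \<bullet> K)" by measurable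
  show p: "Measurable.pred M (\<lambda>\<omega>. pos sg (c + P t \<omega> \<bullet> K))" by (rule pos_pred[OF z_meas[OF t]])
  show "Measurable.pred M (\<lambda>\<omega>. \<not> pos sg (c + P t \<omega> \<bullet> K))" by (rule pred_intros_logic(2)[OF p])
qed

lemma zd:
  assumes t: "t < T" and B: "Measurable.pred M B"
  shows "(\<integral>\<omega>. (c + P t \<omega> \<bullet> K) * (P t \<omega> \<bullet> K) * (if B \<omega> then 1 else 0) \<partial>M)
    = (\<integral>\<omega>. (c + P t \<omega> \<bullet> K)\<^sup>2 * (if B \<omega> then 1 else 0) \<partial>M) - c * (\<integral>\<omega>. (c + P t \<omega> \<bullet> K) * (if B \<omega> then 1 else 0) \<partial>M)"
proof -
  have "(\<integral>\<omega>. (c + P t \<omega> \<bullet> K) * (P t \<omega> \<bullet> K) * (if B \<omega> then 1 else 0) \<partial>M)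
     = (\<integral>\<omega>. (c + P t \<omega> \<bullet> K)\<^sup>2 * (if B \<omega> then 1 else 0) - c * ((c + P t \<omega> \<bullet> K) * (if B \<omega> then 1 else 0)) \<partial>M)"
    by (rule Bochner_Integration.integral_cong) (auto simp: power2_eq_square algebra_simps)
  also have "\<dots> = (\<integral>\<omega>. (c + P t \<omega> \<bullet> K)\<^sup>2 * (if B \<omega> then 1 else 0) \<partial>M) - c * (\<integral>\<omega>. (c + P t \<omega> \<bullet> K) * (if B \<omega> then 1 else 0) \<partial>M)"
    using ind_int[OF z2_int[OF t] B] ind_int[OF z_int[OF t] B] by simp
  finally show ?thesis .
qed

lemma rec_a:
  assumes t: "t < T"
  shows "aa sg t = rho s T (Suc t) * (mean_vec M (P t) \<bullet> KK sg t)
     + ap (Suc t) * (\<integral>\<omega>. (s t + P t \<omega> \<bullet> KK sg t) * (if pos sg (s t + P t \<omega> \<bullet> KK sg t) then 1 else 0) \<partial>M)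
     + am (Suc t) * (\<integral>\<omega>. (s t + P t \<omega> \<bullet> KK sg t) * (if \<not> pos sg (s t + P t \<omega> \<bullet> KK sg t) then 1 else 0) \<partial>M)"
  using ap_rec[OF t] am_rec[OF t]
  by (cases sg) (simp_all add: aa_def KK_def pos_def mult.assoc not_le)

lemma int_c3: "(\<integral>x. c * f x * g x * h x \<partial>N) = c * (\<integral>x. f x * g x * h x \<partial>N)" for c :: real
proof -
  have "(\<lambda>x. c * f x * g x * h x) = (\<lambda>x. c * (f x * g x * h x))" by (simp add: mult.assoc)
  then show ?thesis by simp
qed

lemma int_c2: "(\<integral>x. c * f x * g x \<partial>N) = c * (\<integral>x. f x * g x \<partial>N)" for c :: real
proof -
  have "(\<lambda>x. c * f x * g x) = (\<lambda>x. c * (f x * g x))" by (simp add: mult.assoc)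
  then show ?thesis by simp
qed

lemma rec_b:
  assumes t: "t < T"
  shows "bb sg t = (rho s T (Suc t))\<^sup>2 * (KK sg t \<bullet> (second_moment M (P t) *v KK sg t))
     + 2 * rho s T (Suc t) * (ap (Suc t) * ((\<integral>\<omega>. (s t + P t \<omega> \<bullet> KK sg t)\<^sup>2 * (if pos sg (s t + P t \<omega> \<bullet> KK sg t) then 1 else 0) \<partial>M)
        - s t * (\<integral>\<omega>. (s t + P t \<omega> \<bullet> KK sg t) * (if pos sg (s t + P t \<omega> \<bullet> KK sg t) then 1 else 0) \<partial>M)))
     + 2 * rho s T (Suc t) * (am (Suc t) * ((\<integral>\<omega>. (s t + P t \<omega> \<bullet> KK sg t)\<^sup>2 * (if \<not> pos sg (s t + P t \<omega> \<bullet> KK sg t) then 1 else 0) \<partial>M)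
        - s t * (\<integral>\<omega>. (s t + P t \<omega> \<bullet> KK sg t) * (if \<not> pos sg (s t + P t \<omega> \<bullet> KK sg t) then 1 else 0) \<partial>M)))
     + bp (Suc t) * (\<integral>\<omega>. (s t + P t \<omega> \<bullet> KK sg t)\<^sup>2 * (if pos sg (s t + P t \<omega> \<bullet> KK sg t) then 1 else 0) \<partial>M)
     + bm (Suc t) * (\<integral>\<omega>. (s t + P t \<omega> \<bullet> KK sg t)\<^sup>2 * (if \<not> pos sg (s t + P t \<omega> \<bullet> KK sg t) then 1 else 0) \<partial>M)"
proof -
  have bs: "bb sg t = (rho s T (Suc t))\<^sup>2 * (KK sg t \<bullet> (second_moment M (P t) *v KK sg t))
     + 2 * rho s T (Suc t) * (ap (Suc t) * (\<integral>\<omega>. (s t + P t \<omega> \<bullet> KK sg t) * (P t \<omega> \<bullet> KK sg t) * (if pos sg (s t + P t \<omega> \<bullet> KK sg t) then 1 else 0) \<partial>M))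
     + 2 * rho s T (Suc t) * (am (Suc t) * (\<integral>\<omega>. (s t + P t \<omega> \<bullet> KK sg t) * (P t \<omega> \<bullet> KK sg t) * (if \<not> pos sg (s t + P t \<omega> \<bullet> KK sg t) then 1 else 0) \<partial>M))
     + bp (Suc t) * (\<integral>\<omega>. (s t + P t \<omega> \<bullet> KK sg t)\<^sup>2 * (if pos sg (s t + P t \<omega> \<bullet> KK sg t) then 1 else 0) \<partial>M)
     + bm (Suc t) * (\<integral>\<omega>. (s t + P t \<omega> \<bullet> KK sg t)\<^sup>2 * (if \<not> pos sg (s t + P t \<omega> \<bullet> KK sg t) then 1 else 0) \<partial>M)"
  proof (cases sg)
    case True
    show ?thesis using bp_rec[OF t] unfolding int_c3 int_c2
      by (simp only: eqTrueI[OF True] bb_def KK_def pos_def if_True if_False not_le)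
  next
    case False
    show ?thesis using bm_rec[OF t] unfolding int_c3 int_c2
      by (simp only: eq_False[THEN iffD2, OF False] bb_def KK_def pos_def if_True if_False not_le)
  qed
  show ?thesis unfolding bs zd[OF t zpreds(5)[OF t]] zd[OF t zpreds(6)[OF t]] ..
qed

lemma indep_int:
  fixes f :: "real^'n \<Rightarrow> real" and G :: "real \<Rightarrow> real"
  assumes t: "t < T" and k: "Suc t + k = T" and f: "f \<in> borel_measurable borel"
    and fi: "integrable M (\<lambda>\<omega>. f (P t \<omega>))" and G: "G \<in> borel_measurable borel"
    and Gi: "integrable M (\<lambda>\<omega>. G (HH b k (Suc t) (\<lambda>i. P i \<omega>)))"
  shows "integrable M (\<lambda>\<omega>. f (P t \<omega>) * G (HH b k (Suc t) (\<lambda>i. P i \<omega>)))"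
    and "(\<integral>\<omega>. f (P t \<omega>) * G (HH b k (Suc t) (\<lambda>i. P i \<omega>)) \<partial>M)
         = (\<integral>\<omega>. f (P t \<omega>) \<partial>M) * (\<integral>\<omega>. G (HH b k (Suc t) (\<lambda>i. P i \<omega>)) \<partial>M)"
proof -
  let ?g = "\<lambda>p. G (HH b k (Suc t) p)"
  have gm: "?g \<in> borel_measurable (PiM {Suc t..<T} (\<lambda>_. borel))"
  proof -
    have "(\<lambda>p. HH b k (Suc t) p) \<in> borel_measurable (PiM {Suc t..<T} (\<lambda>_. borel))"
      by (rule HH_meas) (use k in auto)
    from measurable_compose[OF this G] show ?thesis .
  qed
  have eq: "?g (restrict (\<lambda>i. P i \<omega>) {Suc t..<T}) = G (HH b k (Suc t) (\<lambda>i. P i \<omega>))" for \<omega>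
  proof -
    have "HH b k (Suc t) (restrict (\<lambda>i. P i \<omega>) {Suc t..<T}) = HH b k (Suc t) (\<lambda>i. P i \<omega>)"
      by (rule HH_local) (simp add: k[symmetric])
    then show ?thesis by simp
  qed
  have ind: "indep_var borel (\<lambda>\<omega>. f (P t \<omega>)) borel (\<lambda>\<omega>. G (HH b k (Suc t) (\<lambda>i. P i \<omega>)))"
    using indep_PH[OF t f gm] unfolding eq .
  show "integrable M (\<lambda>\<omega>. f (P t \<omega>) * G (HH b k (Suc t) (\<lambda>i. P i \<omega>)))"
    by (rule indep_var_integrable[OF ind fi Gi])
  show "(\<integral>\<omega>. f (P t \<omega>) * G (HH b k (Suc t) (\<lambda>i. P i \<omega>)) \<partial>M)
         = (\<integral>\<omega>. f (P t \<omega>) \<partial>M) * (\<integral>\<omega>. G (HH b k (Suc t) (\<lambda>i. P i \<omega>)) \<partial>M)"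
    by (rule indep_var_lebesgue_integral[OF ind fi Gi])
qed

end



context tc_setup begin

lemma HH_Suc_pos: "HH sg (Suc k) j p = (s j + p j \<bullet> KK sg j) * HH (pos sg (s j + p j \<bullet> KK sg j)) k (Suc j) p"
  by (simp add: Let_def KK_def pos_def)

lemma HH_mom:
  "j + k = T \<Longrightarrow> integrable M (\<lambda>\<omega>. (HH sg k j (\<lambda>i. P i \<omega>))\<^sup>2) \<and> integrable M (\<lambda>\<omega>. HH sg k j (\<lambda>i. P i \<omega>))
    \<and> (\<integral>\<omega>. HH sg k j (\<lambda>i. P i \<omega>) \<partial>M) = rho s T j + aa sg j
    \<and> (\<integral>\<omega>. (HH sg k j (\<lambda>i. P i \<omega>))\<^sup>2 \<partial>M) = (rho s T j)\<^sup>2 + 2 * rho s T j * aa sg j + bb sg j"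
proof (induction k arbitrary: j sg)
  case 0
  then have "j = T" by simp
  then show ?case by (simp add: rho_T aa_def bb_def term_a term_b prob_space)
next
  case (Suc k)
  have t: "j < T" and k: "Suc j + k = T" using Suc.prems by auto
  note IH = Suc.IH[OF k]
  define K where "K = KK sg j"
  define r where "r = rho s T (Suc j)"
  have rj: "rho s T j = s j * r" unfolding r_def by (rule rho_Suc[OF t])
  define f1 where "f1 = (\<lambda>x::real^'n. (s j + x \<bullet> K) * (if pos sg (s j + x \<bullet> K) then 1 else 0 :: real))"
  define f2 where "f2 = (\<lambda>x::real^'n. (s j + x \<bullet> K) * (if \<not> pos sg (s j + x \<bullet> K) then 1 else 0 :: real))"
  define g1 where "g1 = (\<lambda>x::real^'n. (s j + x \<bullet> K)\<^sup>2 * (if pos sg (s j + x \<bullet> K) then 1 else 0 :: real))"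
  define g2 where "g2 = (\<lambda>x::real^'n. (s j + x \<bullet> K)\<^sup>2 * (if \<not> pos sg (s j + x \<bullet> K) then 1 else 0 :: real))"
  define H where "H b \<omega> = HH b k (Suc j) (\<lambda>i. P i \<omega>)" for b \<omega>
  have eqH: "HH sg (Suc k) j (\<lambda>i. P i \<omega>) = f1 (P j \<omega>) * H True \<omega> + f2 (P j \<omega>) * H False \<omega>" for \<omega>
    unfolding HH_Suc_pos K_def[symmetric] f1_def f2_def H_def
    by (cases "pos sg (s j + P j \<omega> \<bullet> K)") simp_all
  have eqH2: "(HH sg (Suc k) j (\<lambda>i. P i \<omega>))\<^sup>2 = g1 (P j \<omega>) * (H True \<omega>)\<^sup>2 + g2 (P j \<omega>) * (H False \<omega>)\<^sup>2" for \<omega>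
    unfolding HH_Suc_pos K_def[symmetric] g1_def g2_def H_def
    by (cases "pos sg (s j + P j \<omega> \<bullet> K)") (simp_all add: power_mult_distrib)
  have pb1[measurable]: "Measurable.pred borel (\<lambda>x::real^'n. pos sg (s j + x \<bullet> K))" by (rule pos_pred_borel)
  have pb2[measurable]: "Measurable.pred borel (\<lambda>x::real^'n. \<not> pos sg (s j + x \<bullet> K))" by (rule pred_intros_logic(2)[OF pb1])
  have mf1: "f1 \<in> borel_measurable borel" unfolding f1_def by measurable
  have mf2: "f2 \<in> borel_measurable borel" unfolding f2_def by measurable
  have mg1: "g1 \<in> borel_measurable borel" unfolding g1_def by measurable
  have mg2: "g2 \<in> borel_measurable borel" unfolding g2_def by measurable
  have if1: "integrable M (\<lambda>\<omega>. f1 (P j \<omega>))" unfolding f1_def using ind_int[OF z_int[OF t] zpreds(5)[OF t]] by simp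
  have if2: "integrable M (\<lambda>\<omega>. f2 (P j \<omega>))" unfolding f2_def using ind_int[OF z_int[OF t] zpreds(6)[OF t]] by simp
  have ig1: "integrable M (\<lambda>\<omega>. g1 (P j \<omega>))" unfolding g1_def using ind_int[OF z2_int[OF t] zpreds(5)[OF t]] by simp
  have ig2: "integrable M (\<lambda>\<omega>. g2 (P j \<omega>))" unfolding g2_def using ind_int[OF z2_int[OF t] zpreds(6)[OF t]] by simp
  have idm: "(\<lambda>x::real. x) \<in> borel_measurable borel" by simp
  have sqm: "(\<lambda>x::real. x\<^sup>2) \<in> borel_measurable borel" by measurable
  have iH: "integrable M (\<lambda>\<omega>. HH b k (Suc j) (\<lambda>i. P i \<omega>))" for b using IH by blast
  have iH2: "integrable M (\<lambda>\<omega>. (HH b k (Suc j) (\<lambda>i. P i \<omega>))\<^sup>2)" for b using IH by blast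
  note A1 = indep_int[OF t k mf1 if1 idm iH] and A2 = indep_int[OF t k mf2 if2 idm iH]
  note B1 = indep_int[OF t k mg1 ig1 sqm iH2] and B2 = indep_int[OF t k mg2 ig2 sqm iH2]
  have EH: "(\<integral>\<omega>. HH b k (Suc j) (\<lambda>i. P i \<omega>) \<partial>M) = r + aa b (Suc j)" for b using IH r_def by blast
  have EH2: "(\<integral>\<omega>. (HH b k (Suc j) (\<lambda>i. P i \<omega>))\<^sup>2 \<partial>M) = r\<^sup>2 + 2 * r * aa b (Suc j) + bb b (Suc j)" for b
    using IH r_def by blast
  have fun1: "(\<lambda>\<omega>. HH sg (Suc k) j (\<lambda>i. P i \<omega>)) = (\<lambda>\<omega>. f1 (P j \<omega>) * H True \<omega> + f2 (P j \<omega>) * H False \<omega>)"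
    using eqH by auto
  have fun2: "(\<lambda>\<omega>. (HH sg (Suc k) j (\<lambda>i. P i \<omega>))\<^sup>2) = (\<lambda>\<omega>. g1 (P j \<omega>) * (H True \<omega>)\<^sup>2 + g2 (P j \<omega>) * (H False \<omega>)\<^sup>2)"
    using eqH2 by auto
  have int1: "integrable M (\<lambda>\<omega>. HH sg (Suc k) j (\<lambda>i. P i \<omega>))"
    unfolding fun1 H_def using A1(1) A2(1) by simp
  have int2: "integrable M (\<lambda>\<omega>. (HH sg (Suc k) j (\<lambda>i. P i \<omega>))\<^sup>2)"
    unfolding fun2 H_def using B1(1) B2(1) by simp
  define I1 where "I1 = (\<integral>\<omega>. f1 (P j \<omega>) \<partial>M)"
  define I2 where "I2 = (\<integral>\<omega>. f2 (P j \<omega>) \<partial>M)"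
  define J1 where "J1 = (\<integral>\<omega>. g1 (P j \<omega>) \<partial>M)"
  define J2 where "J2 = (\<integral>\<omega>. g2 (P j \<omega>) \<partial>M)"
  have E1: "(\<integral>\<omega>. HH sg (Suc k) j (\<lambda>i. P i \<omega>) \<partial>M) = I1 * (r + ap (Suc j)) + I2 * (r + am (Suc j))"
    unfolding fun1 H_def using A1 A2 EH[of True] EH[of False] by (simp add: I1_def I2_def aa_def)
  have E2: "(\<integral>\<omega>. (HH sg (Suc k) j (\<lambda>i. P i \<omega>))\<^sup>2 \<partial>M)
      = J1 * (r\<^sup>2 + 2 * r * ap (Suc j) + bp (Suc j)) + J2 * (r\<^sup>2 + 2 * r * am (Suc j) + bm (Suc j))"
    unfolding fun2 H_def using B1 B2 EH2[of True] EH2[of False] by (simp add: J1_def J2_def aa_def bb_def)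
  have sI: "I1 + I2 = s j + mean_vec M (P j) \<bullet> K"
    unfolding I1_def I2_def f1_def f2_def
    using ind_split[OF z_int[OF t] zpreds(5)[OF t]] z_integral[OF t] by simp
  have sJ: "J1 + J2 = (s j)\<^sup>2 + 2 * s j * (mean_vec M (P j) \<bullet> K) + K \<bullet> (second_moment M (P j) *v K)"
    unfolding J1_def J2_def g1_def g2_def
    using ind_split[OF z2_int[OF t] zpreds(5)[OF t]] z2_integral[OF t] by simp
  have ra: "aa sg j = r * (mean_vec M (P j) \<bullet> K) + ap (Suc j) * I1 + am (Suc j) * I2"
    using rec_a[OF t, of sg] unfolding I1_def I2_def f1_def f2_def K_def r_def .
  have rb: "bb sg j = r\<^sup>2 * (K \<bullet> (second_moment M (P j) *v K)) + 2 * r * (ap (Suc j) * (J1 - s j * I1))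
     + 2 * r * (am (Suc j) * (J2 - s j * I2)) + bp (Suc j) * J1 + bm (Suc j) * J2"
    using rec_b[OF t, of sg] unfolding I1_def I2_def J1_def J2_def f1_def f2_def g1_def g2_def K_def r_def .
  have fin1: "(\<integral>\<omega>. HH sg (Suc k) j (\<lambda>i. P i \<omega>) \<partial>M) = rho s T j + aa sg j"
    unfolding E1 ra rj using sI by algebra
  have fin2: "(\<integral>\<omega>. (HH sg (Suc k) j (\<lambda>i. P i \<omega>))\<^sup>2 \<partial>M) = (rho s T j)\<^sup>2 + 2 * rho s T j * aa sg j + bb sg j"
    unfolding E2 ra rb rj using sI sJ by algebra
  show ?case using int1 int2 fin1 fin2 by blast
qed

end



context tc_setup begin

lemma tw_eq:
  assumes t: "t < T"
  shows "terminal_wealth s P pol T t x v \<omega> = W + (s t * (x - cc t) + P t \<omega> \<bullet> v)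
      * HH (0 \<le> s t * (x - cc t) + P t \<omega> \<bullet> v) (T - Suc t) (Suc t) (\<lambda>i. P i \<omega>)"
proof -
  define x' where "x' = s t * x + P t \<omega> \<bullet> v"
  have e: "x' - cc (Suc t) = s t * (x - cc t) + P t \<omega> \<bullet> v"
    unfolding x'_def using cc_Suc[OF t] by (simp add: algebra_simps)
  have "wealth_run s P pol (Suc t) (T - Suc t) x' \<omega> - W = (x' - cc (Suc t)) * HH (cc (Suc t) \<le> x') (T - Suc t) (Suc t) (\<lambda>i. P i \<omega>)"
    by (rule wealth_lemma) (use t in simp)
  moreover have "(cc (Suc t) \<le> x') = (0 \<le> s t * (x - cc t) + P t \<omega> \<bullet> v)" using e by linarith
  ultimately show ?thesis unfolding terminal_wealth_def x'_def[symmetric] e by simp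
qed

lemma obj_eq:
  fixes x :: real and v :: "real^'n"
  assumes t: "t < T"
  defines "c \<equiv> s t * (x - cc t)"
  shows "tc_objective M P s T gp gm W pol t x v =
      (\<integral>\<omega>. (c + P t \<omega> \<bullet> v)\<^sup>2 * (if 0 \<le> c + P t \<omega> \<bullet> v then 1 else 0) \<partial>M)
         * ((rho s T (Suc t))\<^sup>2 + 2 * rho s T (Suc t) * ap (Suc t) + bp (Suc t))
    + (\<integral>\<omega>. (c + P t \<omega> \<bullet> v)\<^sup>2 * (if c + P t \<omega> \<bullet> v < 0 then 1 else 0) \<partial>M)
         * ((rho s T (Suc t))\<^sup>2 + 2 * rho s T (Suc t) * am (Suc t) + bm (Suc t))
    - ((\<integral>\<omega>. (c + P t \<omega> \<bullet> v) * (if 0 \<le> c + P t \<omega> \<bullet> v then 1 else 0) \<partial>M) * (rho s T (Suc t) + ap (Suc t))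
       + (\<integral>\<omega>. (c + P t \<omega> \<bullet> v) * (if c + P t \<omega> \<bullet> v < 0 then 1 else 0) \<partial>M) * (rho s T (Suc t) + am (Suc t)))\<^sup>2
    - gamma_fun s T gp gm W t x * (W + ((\<integral>\<omega>. (c + P t \<omega> \<bullet> v) * (if 0 \<le> c + P t \<omega> \<bullet> v then 1 else 0) \<partial>M) * (rho s T (Suc t) + ap (Suc t))
       + (\<integral>\<omega>. (c + P t \<omega> \<bullet> v) * (if c + P t \<omega> \<bullet> v < 0 then 1 else 0) \<partial>M) * (rho s T (Suc t) + am (Suc t))))"
proof -
  define k where "k = T - Suc t"
  have k: "Suc t + k = T" using t k_def by simp
  define r where "r = rho s T (Suc t)"
  define f1 where "f1 = (\<lambda>y::real^'n. (c + y \<bullet> v) * (if 0 \<le> c + y \<bullet> v then 1 else 0 :: real))"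
  define f2 where "f2 = (\<lambda>y::real^'n. (c + y \<bullet> v) * (if c + y \<bullet> v < 0 then 1 else 0 :: real))"
  define g1 where "g1 = (\<lambda>y::real^'n. (c + y \<bullet> v)\<^sup>2 * (if 0 \<le> c + y \<bullet> v then 1 else 0 :: real))"
  define g2 where "g2 = (\<lambda>y::real^'n. (c + y \<bullet> v)\<^sup>2 * (if c + y \<bullet> v < 0 then 1 else 0 :: real))"
  define H where "H b \<omega> = HH b k (Suc t) (\<lambda>i. P i \<omega>)" for b \<omega>
  define D where "D \<omega> = f1 (P t \<omega>) * H True \<omega> + f2 (P t \<omega>) * H False \<omega>" for \<omega>
  have XT: "terminal_wealth s P pol T t x v = (\<lambda>\<omega>. W + D \<omega>)"
  proof
    fix \<omega>
    show "terminal_wealth s P pol T t x v \<omega> = W + D \<omega>"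
      unfolding tw_eq[OF t] D_def f1_def f2_def H_def c_def[symmetric] k_def[symmetric]
      by (cases "0 \<le> c + P t \<omega> \<bullet> v") simp_all
  qed
  have D2: "(\<lambda>\<omega>. (D \<omega>)\<^sup>2) = (\<lambda>\<omega>. g1 (P t \<omega>) * (H True \<omega>)\<^sup>2 + g2 (P t \<omega>) * (H False \<omega>)\<^sup>2)"
  proof
    fix \<omega>
    show "(D \<omega>)\<^sup>2 = g1 (P t \<omega>) * (H True \<omega>)\<^sup>2 + g2 (P t \<omega>) * (H False \<omega>)\<^sup>2"
      unfolding D_def f1_def f2_def g1_def g2_def
      by (cases "0 \<le> c + P t \<omega> \<bullet> v") (simp_all add: power_mult_distrib)
  qed
  have mf1: "f1 \<in> borel_measurable borel" unfolding f1_def by measurable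
  have mf2: "f2 \<in> borel_measurable borel" unfolding f2_def by measurable
  have mg1: "g1 \<in> borel_measurable borel" unfolding g1_def by measurable
  have mg2: "g2 \<in> borel_measurable borel" unfolding g2_def by measurable
  have if1: "integrable M (\<lambda>\<omega>. f1 (P t \<omega>))" unfolding f1_def using ind_int[OF z_int[OF t] zpreds(1)[OF t]] by simp
  have if2: "integrable M (\<lambda>\<omega>. f2 (P t \<omega>))" unfolding f2_def using ind_int[OF z_int[OF t] zpreds(3)[OF t]] by simp
  have ig1: "integrable M (\<lambda>\<omega>. g1 (P t \<omega>))" unfolding g1_def using ind_int[OF z2_int[OF t] zpreds(1)[OF t]] by simp
  have ig2: "integrable M (\<lambda>\<omega>. g2 (P t \<omega>))" unfolding g2_def using ind_int[OF z2_int[OF t] zpreds(3)[OF t]] by simp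
  have idm: "(\<lambda>x::real. x) \<in> borel_measurable borel" by simp
  have sqm: "(\<lambda>x::real. x\<^sup>2) \<in> borel_measurable borel" by measurable
  have IH: "\<And>b. integrable M (\<lambda>\<omega>. (HH b k (Suc t) (\<lambda>i. P i \<omega>))\<^sup>2) \<and> integrable M (\<lambda>\<omega>. HH b k (Suc t) (\<lambda>i. P i \<omega>))
    \<and> (\<integral>\<omega>. HH b k (Suc t) (\<lambda>i. P i \<omega>) \<partial>M) = r + aa b (Suc t)
    \<and> (\<integral>\<omega>. (HH b k (Suc t) (\<lambda>i. P i \<omega>))\<^sup>2 \<partial>M) = r\<^sup>2 + 2 * r * aa b (Suc t) + bb b (Suc t)"
    using HH_mom[OF k] unfolding r_def .
  have iH: "integrable M (\<lambda>\<omega>. HH b k (Suc t) (\<lambda>i. P i \<omega>))" for b using IH by blast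
  have iH2: "integrable M (\<lambda>\<omega>. (HH b k (Suc t) (\<lambda>i. P i \<omega>))\<^sup>2)" for b using IH by blast
  have EH: "(\<integral>\<omega>. HH b k (Suc t) (\<lambda>i. P i \<omega>) \<partial>M) = r + aa b (Suc t)" for b using IH by blast
  have EH2: "(\<integral>\<omega>. (HH b k (Suc t) (\<lambda>i. P i \<omega>))\<^sup>2 \<partial>M) = r\<^sup>2 + 2 * r * aa b (Suc t) + bb b (Suc t)" for b
    using IH by blast
  note A1 = indep_int[OF t k mf1 if1 idm iH] and A2 = indep_int[OF t k mf2 if2 idm iH]
  note B1 = indep_int[OF t k mg1 ig1 sqm iH2] and B2 = indep_int[OF t k mg2 ig2 sqm iH2]
  have Dfun: "D = (\<lambda>\<omega>. f1 (P t \<omega>) * HH True k (Suc t) (\<lambda>i. P i \<omega>) + f2 (P t \<omega>) * HH False k (Suc t) (\<lambda>i. P i \<omega>))"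
    unfolding D_def H_def by simp
  have intD: "integrable M D" unfolding Dfun using A1(1) A2(1) by simp
  have intD2: "integrable M (\<lambda>\<omega>. (D \<omega>)\<^sup>2)" unfolding D2 H_def using B1(1) B2(1) by simp
  define I1 where "I1 = (\<integral>\<omega>. f1 (P t \<omega>) \<partial>M)"
  define I2 where "I2 = (\<integral>\<omega>. f2 (P t \<omega>) \<partial>M)"
  define J1 where "J1 = (\<integral>\<omega>. g1 (P t \<omega>) \<partial>M)"
  define J2 where "J2 = (\<integral>\<omega>. g2 (P t \<omega>) \<partial>M)"
  have ED: "(\<integral>\<omega>. D \<omega> \<partial>M) = I1 * (r + ap (Suc t)) + I2 * (r + am (Suc t))"
    unfolding Dfun using A1 A2 EH[of True] EH[of False] by (simp add: I1_def I2_def aa_def)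
  have ED2: "(\<integral>\<omega>. (D \<omega>)\<^sup>2 \<partial>M) = J1 * (r\<^sup>2 + 2 * r * ap (Suc t) + bp (Suc t)) + J2 * (r\<^sup>2 + 2 * r * am (Suc t) + bm (Suc t))"
    unfolding D2 H_def using B1 B2 EH2[of True] EH2[of False] by (simp add: J1_def J2_def aa_def bb_def)
  define m where "m = (\<integral>\<omega>. D \<omega> \<partial>M)"
  have EX: "(\<integral>\<omega>. W + D \<omega> \<partial>M) = W + m" using intD by (simp add: prob_space m_def)
  have sq: "(\<lambda>\<omega>. (W + D \<omega> - (W + m))\<^sup>2) = (\<lambda>\<omega>. (D \<omega>)\<^sup>2 + (- 2 * m) * D \<omega> + m\<^sup>2)"
    by (auto simp: power2_eq_square algebra_simps)
  have V: "(\<integral>\<omega>. (W + D \<omega> - (W + m))\<^sup>2 \<partial>M) = (\<integral>\<omega>. (D \<omega>)\<^sup>2 \<partial>M) - m\<^sup>2"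
    unfolding sq using intD intD2 by (simp add: prob_space m_def power2_eq_square)
  have "tc_objective M P s T gp gm W pol t x v = (\<integral>\<omega>. (D \<omega>)\<^sup>2 \<partial>M) - m\<^sup>2 - gamma_fun s T gp gm W t x * (W + m)"
    unfolding tc_objective_def Let_def XT EX V ..
  then show ?thesis unfolding ED2 m_def ED
    by (simp add: I1_def I2_def J1_def J2_def f1_def f2_def g1_def g2_def r_def)
qed

end



context tc_setup begin

lemma obj_plus:
  fixes x :: real and K :: "real^'n" and gp gm :: "nat \<Rightarrow> real"
  assumes t: "t < T" and y: "0 < x - cc t"
  shows "tc_objective M P s T gp gm W pol t x ((x - cc t) *\<^sub>R K)
     = (x - cc t)\<^sup>2 * F_plus M P s T ap am bp bm gp t K - gp t * (x - cc t) * W"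
proof -
  define yy where "yy = x - cc t"
  have yy: "0 < yy" using y yy_def by simp
  define r where "r = rho s T (Suc t)"
  define mK where "mK = mean_vec M (P t) \<bullet> K"
  define Q where "Q = K \<bullet> (second_moment M (P t) *v K)"
  define I1 where "I1 = (\<integral>\<omega>. (s t + P t \<omega> \<bullet> K) * (if 0 \<le> s t + P t \<omega> \<bullet> K then 1 else 0) \<partial>M)"
  define I2 where "I2 = (\<integral>\<omega>. (s t + P t \<omega> \<bullet> K) * (if s t + P t \<omega> \<bullet> K < 0 then 1 else 0) \<partial>M)"
  define J1 where "J1 = (\<integral>\<omega>. (s t + P t \<omega> \<bullet> K)\<^sup>2 * (if 0 \<le> s t + P t \<omega> \<bullet> K then 1 else 0) \<partial>M)"
  define J2 where "J2 = (\<integral>\<omega>. (s t + P t \<omega> \<bullet> K)\<^sup>2 * (if s t + P t \<omega> \<bullet> K < 0 then 1 else 0) \<partial>M)"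
  have lin: "s t * yy + P t \<omega> \<bullet> (yy *\<^sub>R K) = yy * (s t + P t \<omega> \<bullet> K)" for \<omega>
    by (simp add: algebra_simps)
  have c1: "(0 \<le> yy * z) = (0 \<le> z)" for z :: real using yy by (simp add: zero_le_mult_iff)
  have c2: "(yy * z < 0) = (z < 0)" for z :: real using yy by (simp add: mult_less_0_iff)
  have e1: "(\<integral>\<omega>. (s t * yy + P t \<omega> \<bullet> (yy *\<^sub>R K)) * (if 0 \<le> s t * yy + P t \<omega> \<bullet> (yy *\<^sub>R K) then 1 else 0) \<partial>M) = yy * I1"
    unfolding lin c1 I1_def by (simp add: mult.assoc)
  have e2: "(\<integral>\<omega>. (s t * yy + P t \<omega> \<bullet> (yy *\<^sub>R K)) * (if s t * yy + P t \<omega> \<bullet> (yy *\<^sub>R K) < 0 then 1 else 0) \<partial>M) = yy * I2"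
    unfolding lin c2 I2_def by (simp add: mult.assoc)
  have e3: "(\<integral>\<omega>. (s t * yy + P t \<omega> \<bullet> (yy *\<^sub>R K))\<^sup>2 * (if 0 \<le> s t * yy + P t \<omega> \<bullet> (yy *\<^sub>R K) then 1 else 0) \<partial>M) = yy\<^sup>2 * J1"
    unfolding lin c1 J1_def by (simp add: mult.assoc power_mult_distrib)
  have e4: "(\<integral>\<omega>. (s t * yy + P t \<omega> \<bullet> (yy *\<^sub>R K))\<^sup>2 * (if s t * yy + P t \<omega> \<bullet> (yy *\<^sub>R K) < 0 then 1 else 0) \<partial>M) = yy\<^sup>2 * J2"
    unfolding lin c2 J2_def by (simp add: mult.assoc power_mult_distrib)
  have g: "gamma_fun s T gp gm W t x = gp t * yy"
    using yy unfolding gamma_fun_def yy_def cc_def by simp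
  have O: "tc_objective M P s T gp gm W pol t x (yy *\<^sub>R K)
    = yy\<^sup>2 * J1 * (r\<^sup>2 + 2 * r * ap (Suc t) + bp (Suc t)) + yy\<^sup>2 * J2 * (r\<^sup>2 + 2 * r * am (Suc t) + bm (Suc t))
      - (yy * I1 * (r + ap (Suc t)) + yy * I2 * (r + am (Suc t)))\<^sup>2
      - gp t * yy * (W + (yy * I1 * (r + ap (Suc t)) + yy * I2 * (r + am (Suc t))))"
    using obj_eq[OF t, where x=x and v="yy *\<^sub>R K" and gp=gp and gm=gm] unfolding yy_def[symmetric] e1 e2 e3 e4 g r_def .
  have F: "F_plus M P s T ap am bp bm gp t K = r\<^sup>2 * (Q - mK\<^sup>2) + (2 * r * ap (Suc t) + bp (Suc t)) * J1
      + (2 * r * am (Suc t) + bm (Suc t)) * J2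
      - (ap (Suc t) * I1 + am (Suc t) * I2)\<^sup>2 - 2 * r * (ap (Suc t) * I1 + am (Suc t) * I2) * (s t + mK)
      - gp t * (ap (Suc t) * I1 + am (Suc t) * I2) - r * gp t * (s t + mK)"
    unfolding F_plus_def Let_def int_c2 cov_eq r_def[symmetric] mK_def[symmetric] Q_def[symmetric]
      I1_def[symmetric] I2_def[symmetric] J1_def[symmetric] J2_def[symmetric] ..
  have sI: "I1 + I2 = s t + mK"
    unfolding I1_def I2_def mK_def
    using ind_split[OF z_int[OF t] zpreds(1)[OF t]] z_integral[OF t] by (simp add: not_le)
  have sJ: "J1 + J2 = (s t)\<^sup>2 + 2 * s t * mK + Q"
    unfolding J1_def J2_def mK_def Q_def
    using ind_split[OF z2_int[OF t] zpreds(1)[OF t]] z2_integral[OF t] by (simp add: not_le)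
  show ?thesis unfolding yy_def[symmetric] O F using sI sJ by algebra
qed

lemma obj_minus:
  fixes x :: real and K :: "real^'n" and gp gm :: "nat \<Rightarrow> real"
  assumes t: "t < T" and y: "x - cc t < 0"
  shows "tc_objective M P s T gp gm W pol t x ((x - cc t) *\<^sub>R K)
     = (x - cc t)\<^sup>2 * F_minus M P s T ap am bp bm gm t K + gm t * (x - cc t) * W"
proof -
  define yy where "yy = x - cc t"
  have yy: "yy < 0" using y yy_def by simp
  define r where "r = rho s T (Suc t)"
  define mK where "mK = mean_vec M (P t) \<bullet> K"
  define Q where "Q = K \<bullet> (second_moment M (P t) *v K)"
  define I1 where "I1 = (\<integral>\<omega>. (s t + P t \<omega> \<bullet> K) * (if s t + P t \<omega> \<bullet> K \<le> 0 then 1 else 0) \<partial>M)"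
  define I2 where "I2 = (\<integral>\<omega>. (s t + P t \<omega> \<bullet> K) * (if 0 < s t + P t \<omega> \<bullet> K then 1 else 0) \<partial>M)"
  define J1 where "J1 = (\<integral>\<omega>. (s t + P t \<omega> \<bullet> K)\<^sup>2 * (if s t + P t \<omega> \<bullet> K \<le> 0 then 1 else 0) \<partial>M)"
  define J2 where "J2 = (\<integral>\<omega>. (s t + P t \<omega> \<bullet> K)\<^sup>2 * (if 0 < s t + P t \<omega> \<bullet> K then 1 else 0) \<partial>M)"
  have lin: "s t * yy + P t \<omega> \<bullet> (yy *\<^sub>R K) = yy * (s t + P t \<omega> \<bullet> K)" for \<omega>
    by (simp add: algebra_simps)
  have c1: "(0 \<le> yy * z) = (z \<le> 0)" for z :: real using yy by (simp add: zero_le_mult_iff)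
  have c2: "(yy * z < 0) = (0 < z)" for z :: real using yy by (simp add: mult_less_0_iff)
  have e1: "(\<integral>\<omega>. (s t * yy + P t \<omega> \<bullet> (yy *\<^sub>R K)) * (if 0 \<le> s t * yy + P t \<omega> \<bullet> (yy *\<^sub>R K) then 1 else 0) \<partial>M) = yy * I1"
    unfolding lin c1 I1_def by (simp add: mult.assoc)
  have e2: "(\<integral>\<omega>. (s t * yy + P t \<omega> \<bullet> (yy *\<^sub>R K)) * (if s t * yy + P t \<omega> \<bullet> (yy *\<^sub>R K) < 0 then 1 else 0) \<partial>M) = yy * I2"
    unfolding lin c2 I2_def by (simp add: mult.assoc)
  have e3: "(\<integral>\<omega>. (s t * yy + P t \<omega> \<bullet> (yy *\<^sub>R K))\<^sup>2 * (if 0 \<le> s t * yy + P t \<omega> \<bullet> (yy *\<^sub>R K) then 1 else 0) \<partial>M) = yy\<^sup>2 * J1"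
    unfolding lin c1 J1_def by (simp add: mult.assoc power_mult_distrib)
  have e4: "(\<integral>\<omega>. (s t * yy + P t \<omega> \<bullet> (yy *\<^sub>R K))\<^sup>2 * (if s t * yy + P t \<omega> \<bullet> (yy *\<^sub>R K) < 0 then 1 else 0) \<partial>M) = yy\<^sup>2 * J2"
    unfolding lin c2 J2_def by (simp add: mult.assoc power_mult_distrib)
  have g: "gamma_fun s T gp gm W t x = - gm t * yy"
    using yy unfolding gamma_fun_def yy_def cc_def by simp
  have O: "tc_objective M P s T gp gm W pol t x (yy *\<^sub>R K)
    = yy\<^sup>2 * J1 * (r\<^sup>2 + 2 * r * ap (Suc t) + bp (Suc t)) + yy\<^sup>2 * J2 * (r\<^sup>2 + 2 * r * am (Suc t) + bm (Suc t))
      - (yy * I1 * (r + ap (Suc t)) + yy * I2 * (r + am (Suc t)))\<^sup>2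
      - (- gm t * yy) * (W + (yy * I1 * (r + ap (Suc t)) + yy * I2 * (r + am (Suc t))))"
    using obj_eq[OF t, where x=x and v="yy *\<^sub>R K" and gp=gp and gm=gm] unfolding yy_def[symmetric] e1 e2 e3 e4 g r_def .
  have F: "F_minus M P s T ap am bp bm gm t K = r\<^sup>2 * (Q - mK\<^sup>2) + (2 * r * ap (Suc t) + bp (Suc t)) * J1
      + (2 * r * am (Suc t) + bm (Suc t)) * J2
      - (ap (Suc t) * I1 + am (Suc t) * I2)\<^sup>2 - 2 * r * (ap (Suc t) * I1 + am (Suc t) * I2) * (s t + mK)
      + gm t * (ap (Suc t) * I1 + am (Suc t) * I2) + r * gm t * (s t + mK)"
    unfolding F_minus_def Let_def int_c2 cov_eq r_def[symmetric] mK_def[symmetric] Q_def[symmetric]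
      I1_def[symmetric] I2_def[symmetric] J1_def[symmetric] J2_def[symmetric] ..
  have sI: "I1 + I2 = s t + mK"
    unfolding I1_def I2_def mK_def
    using ind_split[OF z_int[OF t] zpreds(2)[OF t]] z_integral[OF t] by (simp add: not_le)
  have sJ: "J1 + J2 = (s t)\<^sup>2 + 2 * s t * mK + Q"
    unfolding J1_def J2_def mK_def Q_def
    using ind_split[OF z2_int[OF t] zpreds(2)[OF t]] z2_integral[OF t] by (simp add: not_le)
  show ?thesis unfolding yy_def[symmetric] O F using sI sJ by algebra
qed

end



theorem theorem2:
  fixes M :: "'a measure"
    and P :: "nat \<Rightarrow> 'a \<Rightarrow> real^'n"
    and s :: "nat \<Rightarrow> real"
    and T :: nat
    and A :: "real^'n^'m"
    and gp gm :: "nat \<Rightarrow> real"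
    and W :: real
    and ap am bp bm :: "nat \<Rightarrow> real"
    and Kp Km :: "nat \<Rightarrow> real^'n"
  assumes prob: "prob_space M"
    and s_gt1: "\<And>t. t < T \<Longrightarrow> s t > 1"
    and meas: "\<And>t. t < T \<Longrightarrow> P t \<in> borel_measurable M"
    and indep: "prob_space.indep_vars M (\<lambda>_. borel) P {..<T}"
    and abs_cont: "\<And>t. t < T \<Longrightarrow> absolutely_continuous lborel (distr M borel (P t))"
    and first_mom: "\<And>t i. t < T \<Longrightarrow> integrable M (\<lambda>\<omega>. P t \<omega> $ i)"
    and second_mom: "\<And>t i. t < T \<Longrightarrow> integrable M (\<lambda>\<omega>. (P t \<omega> $ i)\<^sup>2)"
    and cov_pd: "\<And>t K. t < T \<Longrightarrow> K \<noteq> 0 \<Longrightarrow> K \<bullet> (cov_mat M (P t) *v K) > 0"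
    and no_arb: "\<And>t L. t < T \<Longrightarrow> L \<noteq> 0 \<Longrightarrow>
        \<not> (AE \<omega> in M. P t \<omega> \<bullet> L \<le> 0) \<and> \<not> (AE \<omega> in M. P t \<omega> \<bullet> L \<ge> 0)"
    and gp_nn: "\<And>t. gp t \<ge> 0"
    and gm_nn: "\<And>t. gm t \<ge> 0"
    and term_a: "ap T = 0" "am T = 0"
    and term_b: "bp T = 0" "bm T = 0"
    and Kp_min: "\<And>t. t < T \<Longrightarrow> Kp t \<in> cone A \<and>
        (\<forall>K\<in>cone A. F_plus M P s T ap am bp bm gp t (Kp t) \<le> F_plus M P s T ap am bp bm gp t K)"
    and Km_min: "\<And>t. t < T \<Longrightarrow> Km t \<in> uminus ` cone A \<and>
        (\<forall>K\<in>uminus ` cone A. F_minus M P s T ap am bp bm gm t (Km t) \<le> F_minus M P s T ap am bp bm gm t K)"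
    and ap_rec: "\<And>t. t < T \<Longrightarrow> ap t =
        rho s T (Suc t) * (mean_vec M (P t) \<bullet> Kp t)
        + (\<integral>\<omega>. ap (Suc t) * (s t + P t \<omega> \<bullet> Kp t) * (if s t + P t \<omega> \<bullet> Kp t \<ge> 0 then 1 else 0) \<partial>M)
        + (\<integral>\<omega>. am (Suc t) * (s t + P t \<omega> \<bullet> Kp t) * (if s t + P t \<omega> \<bullet> Kp t < 0 then 1 else 0) \<partial>M)"
    and am_rec: "\<And>t. t < T \<Longrightarrow> am t =
        rho s T (Suc t) * (mean_vec M (P t) \<bullet> Km t)
        + (\<integral>\<omega>. ap (Suc t) * (s t + P t \<omega> \<bullet> Km t) * (if s t + P t \<omega> \<bullet> Km t \<le> 0 then 1 else 0) \<partial>M)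
        + (\<integral>\<omega>. am (Suc t) * (s t + P t \<omega> \<bullet> Km t) * (if s t + P t \<omega> \<bullet> Km t > 0 then 1 else 0) \<partial>M)"
    and bp_rec: "\<And>t. t < T \<Longrightarrow> bp t =
        (rho s T (Suc t))\<^sup>2 * (Kp t \<bullet> (second_moment M (P t) *v Kp t))
        + 2 * rho s T (Suc t) * (\<integral>\<omega>. ap (Suc t) * (s t + P t \<omega> \<bullet> Kp t) * (P t \<omega> \<bullet> Kp t)
              * (if s t + P t \<omega> \<bullet> Kp t \<ge> 0 then 1 else 0) \<partial>M)
        + 2 * rho s T (Suc t) * (\<integral>\<omega>. am (Suc t) * (s t + P t \<omega> \<bullet> Kp t) * (P t \<omega> \<bullet> Kp t)
              * (if s t + P t \<omega> \<bullet> Kp t < 0 then 1 else 0) \<partial>M)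
        + (\<integral>\<omega>. bp (Suc t) * (s t + P t \<omega> \<bullet> Kp t)\<^sup>2 * (if s t + P t \<omega> \<bullet> Kp t \<ge> 0 then 1 else 0) \<partial>M)
        + (\<integral>\<omega>. bm (Suc t) * (s t + P t \<omega> \<bullet> Kp t)\<^sup>2 * (if s t + P t \<omega> \<bullet> Kp t < 0 then 1 else 0) \<partial>M)"
    and bm_rec: "\<And>t. t < T \<Longrightarrow> bm t =
        (rho s T (Suc t))\<^sup>2 * (Km t \<bullet> (second_moment M (P t) *v Km t))
        + 2 * rho s T (Suc t) * (\<integral>\<omega>. ap (Suc t) * (s t + P t \<omega> \<bullet> Km t) * (P t \<omega> \<bullet> Km t)
              * (if s t + P t \<omega> \<bullet> Km t \<le> 0 then 1 else 0) \<partial>M)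
        + 2 * rho s T (Suc t) * (\<integral>\<omega>. am (Suc t) * (s t + P t \<omega> \<bullet> Km t) * (P t \<omega> \<bullet> Km t)
              * (if s t + P t \<omega> \<bullet> Km t > 0 then 1 else 0) \<partial>M)
        + (\<integral>\<omega>. bp (Suc t) * (s t + P t \<omega> \<bullet> Km t)\<^sup>2 * (if s t + P t \<omega> \<bullet> Km t \<le> 0 then 1 else 0) \<partial>M)
        + (\<integral>\<omega>. bm (Suc t) * (s t + P t \<omega> \<bullet> Km t)\<^sup>2 * (if s t + P t \<omega> \<bullet> Km t > 0 then 1 else 0) \<partial>M)"
  shows "time_consistent M P s T A gp gm W
           (\<lambda>t x. if x \<ge> W / rho s T t then (x - W / rho s T t) *\<^sub>R Kp t
                  else (x - W / rho s T t) *\<^sub>R Km t)"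
proof -
  interpret tc: tc_setup M P s T Kp Km W ap am bp bm
    apply (rule tc_setup.intro[OF prob])
    apply (rule tc_setup_axioms.intro)
    by (fact s_gt1 meas indep second_mom term_a term_b ap_rec am_rec bp_rec bm_rec)+
  have pe: "(\<lambda>t x. if x \<ge> W / rho s T t then (x - W / rho s T t) *\<^sub>R Kp t
                  else (x - W / rho s T t) *\<^sub>R Km t) = tc.pol"
    unfolding tc.pol_def ..
  have cone_scale: "c *\<^sub>R K \<in> cone A" if "0 \<le> c" "K \<in> cone A" for c K
    using that unfolding cone_def by (simp add: matrix_vector_mult_scaleR)
  show ?thesis
    unfolding time_consistent_def pe
  proof (intro allI impI)
    fix t x assume t: "t < T"
    have cc: "tc.cc t = W / rho s T t" by (simp add: tc.cc_def)
    let ?obj = "tc_objective M P s T gp gm W tc.pol t x"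
    consider (p) "0 < x - tc.cc t" | (z) "x = tc.cc t" | (n) "x - tc.cc t < 0" by linarith
    then show "tc.pol t x \<in> cone A \<and> (\<forall>v\<in>cone A. ?obj (tc.pol t x) \<le> ?obj v)"
    proof cases
      case p
      define y where "y = x - tc.cc t"
      have y: "0 < y" using p y_def by simp
      have pol: "tc.pol t x = y *\<^sub>R Kp t" unfolding tc.pol_def y_def cc using p cc by simp
      have Kc: "Kp t \<in> cone A" and Kmin: "\<And>K. K \<in> cone A \<Longrightarrow> F_plus M P s T ap am bp bm gp t (Kp t) \<le> F_plus M P s T ap am bp bm gp t K"
        using Kp_min[OF t] by auto
      have "tc.pol t x \<in> cone A" unfolding pol using y Kc by (intro cone_scale) auto
      moreover have "?obj (tc.pol t x) \<le> ?obj v" if v: "v \<in> cone A" for v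
      proof -
        define v' where "v' = (1 / y) *\<^sub>R v"
        have v'c: "v' \<in> cone A" unfolding v'_def using y v by (intro cone_scale) auto
        have vv: "v = y *\<^sub>R v'" unfolding v'_def using y by simp
        have "?obj (tc.pol t x) = y\<^sup>2 * F_plus M P s T ap am bp bm gp t (Kp t) - gp t * y * W"
          unfolding pol y_def by (rule tc.obj_plus[OF t p])
        also have "\<dots> \<le> y\<^sup>2 * F_plus M P s T ap am bp bm gp t v' - gp t * y * W"
          using Kmin[OF v'c] by (simp add: mult_left_mono)
        also have "\<dots> = ?obj v"
          unfolding vv y_def by (rule tc.obj_plus[OF t p, symmetric])
        finally show ?thesis .
      qed
      ultimately show ?thesis by blast
    next
      case n
      define y where "y = x - tc.cc t"
      have y: "y < 0" using n y_def by simp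
      have pol: "tc.pol t x = y *\<^sub>R Km t" unfolding tc.pol_def y_def cc using n cc by simp
      have Kc: "Km t \<in> uminus ` cone A" and Kmin: "\<And>K. K \<in> uminus ` cone A \<Longrightarrow> F_minus M P s T ap am bp bm gm t (Km t) \<le> F_minus M P s T ap am bp bm gm t K"
        using Km_min[OF t] by auto
      obtain K0 where K0: "K0 \<in> cone A" "Km t = - K0" using Kc by auto
      have "tc.pol t x = (- y) *\<^sub>R K0" unfolding pol K0(2) by simp
      then have "tc.pol t x \<in> cone A" using y K0(1) cone_scale[of "- y" K0] by simp
      moreover have "?obj (tc.pol t x) \<le> ?obj v" if v: "v \<in> cone A" for v
      proof -
        define v' where "v' = (1 / y) *\<^sub>R v"
        have "(- 1 / y) *\<^sub>R v \<in> cone A" using y v by (intro cone_scale) (auto simp: divide_simps)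
        moreover have "v' = - ((- 1 / y) *\<^sub>R v)" unfolding v'_def by simp
        ultimately have v'c: "v' \<in> uminus ` cone A" by blast
        have vv: "v = y *\<^sub>R v'" unfolding v'_def using y by simp
        have "?obj (tc.pol t x) = y\<^sup>2 * F_minus M P s T ap am bp bm gm t (Km t) + gm t * y * W"
          unfolding pol y_def by (rule tc.obj_minus[OF t n])
        also have "\<dots> \<le> y\<^sup>2 * F_minus M P s T ap am bp bm gm t v' + gm t * y * W"
          using Kmin[OF v'c] by (simp add: mult_left_mono)
        also have "\<dots> = ?obj v"
          unfolding vv y_def by (rule tc.obj_minus[OF t n, symmetric])
        finally show ?thesis .
      qed
      ultimately show ?thesis by blast
    next
      case z
      have pol: "tc.pol t x = 0" unfolding tc.pol_def using z cc by simp
      have g: "gamma_fun s T gp gm W t x = 0" unfolding gamma_fun_def using z cc by simp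
      have "0 \<in> cone A" unfolding cone_def by simp
      moreover have "?obj 0 = 0"
        using tc.obj_eq[OF t, where x=x and v=0 and gp=gp and gm=gm] g z by simp
      moreover have "0 \<le> ?obj v" for v
        unfolding tc_objective_def Let_def g by simp
      ultimately show ?thesis unfolding pol by simp
    qed
  qed
qed


end
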